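(* Let $\mathsf X$ be a metric space and $Q$ a transition kernel on $\mathsf X$. Then: (a) if $Q$ is strongly irreducible, then $Q$ is weakly irreducible; (b) if $Q$ is weakly irreducible, then $Q$ is open set irreducible.
   Context: $\mathscr B$ is the Borel $\sigma$-algebra of $\mathsf X$. A transition kernel on $\mathsf X$ is a map $Q:\mathsf X\times\mathscr B\to[0,1]$ that is Borel measurable in its first argument and a probability measure in its second; $Q^n$ denotes the $n$-step kernel, $Q^n(x,B)=(Q^n\mathbb 1_B)(x)$, where $Q$ also denotes the Markov operator $(Qf)(x)=\int f(x')Q(x,\mathrm dx')$ on $b\mathsf X$, the Banach space of bounded Borel measurable real functions on $\mathsf X$ with the supremum norm and pointwise order. $b\mathsf X_+$ denotes its nonnegative elements, $b\mathsf X'$ its dual, and $b\mathsf X'_+$ the positive functionals. An ideal of $b\mathsf X$ is a linear subspace $I$ with $f\in I$, $|g|\le|f|\Rightarrow g\in I$; it is invariant for $K$ if $KI\subset I$. A positive linear operator on $b\mathsf X$ is irreducible if its only invariant ideals are $\{0\}$ and $b\mathsf X$; equivalently (a standard fact), for every nonzero $f\in b\mathsf X_+$ and nonzero $\mu\in b\mathsf X'_+$ there is $m\in\mathbb N=\{1,2,\dots\}$ with $\mu(K^mf)>0$. $Q$ is strongly irreducible if its Markov operator is irreducible in this sense. $Q$ is weakly irreducible if there is a measure $\pi$ on $(\mathsf X,\mathscr B)$ such that $\pi(G)>0$ for every nonempty open $G$, and $Q$ is $\pi$-irreducible: for every $x\in\mathsf X$ and every $B\in\mathscr B$ with $\pi(B)>0$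 there is $n\in\mathbb N$ with $Q^n(x,B)>0$. A point $y$ is $Q$-reachable from $x$ if for each open neighborhood $G$ of $y$ there is $n\in\mathbb N$ with $Q^n(x,G)>0$; $Q$ is open set irreducible if every $y$ is $Q$-reachable from every $x$. *)

theory Defs
  imports "HOL-Probability.Probability"
begin

definition bX :: "('a::metric_space \<Rightarrow> real) set" where
  "bX = {f. f \<in> borel_measurable borel \<and> bounded (range f)}"

definition transition_kernel :: "('a::metric_space \<Rightarrow> 'a measure) \<Rightarrow> bool" where
  "transition_kernel Q \<longleftrightarrow>
     (\<forall>x. prob_space (Q x) \<and> sets (Q x) = sets borel) \<and>
     (\<forall>B\<in>sets borel. (\<lambda>x. measure (Q x) B) \<in> borel_measurable borel)"

definition markov_op :: "('a::metric_space \<Rightarrow> 'a measure) \<Rightarrow> ('a \<Rightarrow> real) \<Rightarrow> 'a \<Rightarrow> real" where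
  "markov_op Q f = (\<lambda>x. \<integral>y. f y \<partial>(Q x))"

definition kstep :: "('a::metric_space \<Rightarrow> 'a measure) \<Rightarrow> nat \<Rightarrow> 'a \<Rightarrow> 'a set \<Rightarrow> real" where
  "kstep Q n x B = ((markov_op Q ^^ n) (indicator B)) x"

definition bX_ideal :: "('a::metric_space \<Rightarrow> real) set \<Rightarrow> bool" where
  "bX_ideal I \<longleftrightarrow> I \<subseteq> bX \<and> (\<lambda>x. 0) \<in> I \<and>
     (\<forall>f\<in>I. \<forall>g\<in>I. (\<lambda>x. f x + g x) \<in> I) \<and>
     (\<forall>c::real. \<forall>f\<in>I. (\<lambda>x. c * f x) \<in> I) \<and>
     (\<forall>f\<in>I. \<forall>g\<in>bX. (\<forall>x. \<bar>g x\<bar> \<le> \<bar>f x\<bar>) \<longrightarrow> g \<in> I)"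

definition irreducible_op :: "(('a::metric_space \<Rightarrow> real) \<Rightarrow> ('a \<Rightarrow> real)) \<Rightarrow> bool" where
  "irreducible_op K \<longleftrightarrow>
     (\<forall>I. bX_ideal I \<and> (\<forall>f\<in>I. K f \<in> I) \<longrightarrow> I = {\<lambda>x. 0} \<or> I = bX)"

definition strongly_irreducible :: "('a::metric_space \<Rightarrow> 'a measure) \<Rightarrow> bool" where
  "strongly_irreducible Q \<longleftrightarrow> irreducible_op (markov_op Q)"

definition pi_irreducible :: "('a::metric_space \<Rightarrow> 'a measure) \<Rightarrow> 'a measure \<Rightarrow> bool" where
  "pi_irreducible Q \<pi> \<longleftrightarrow>
     (\<forall>x. \<forall>B\<in>sets borel. emeasure \<pi> B > 0 \<longrightarrow> (\<exists>n\<ge>1. kstep Q n x B > 0))"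

definition weakly_irreducible :: "('a::metric_space \<Rightarrow> 'a measure) \<Rightarrow> bool" where
  "weakly_irreducible Q \<longleftrightarrow>
     (\<exists>\<pi>. sets \<pi> = sets borel \<and> (\<forall>G. open G \<and> G \<noteq> {} \<longrightarrow> emeasure \<pi> G > 0) \<and>
          pi_irreducible Q \<pi>)"

definition reachable :: "('a::metric_space \<Rightarrow> 'a measure) \<Rightarrow> 'a \<Rightarrow> 'a \<Rightarrow> bool" where
  "reachable Q x y \<longleftrightarrow> (\<forall>G. open G \<and> y \<in> G \<longrightarrow> (\<exists>n\<ge>1. kstep Q n x G > 0))"

definition open_set_irreducible :: "('a::metric_space \<Rightarrow> 'a measure) \<Rightarrow> bool" where
  "open_set_irreducible Q \<longleftrightarrow> (\<forall>x y. reachable Q x y)"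

end

theory Submission
  imports Defs
begin

lemma bX_iff: "f \<in> bX \<longleftrightarrow> f \<in> borel_measurable borel \<and> (\<exists>B. \<forall>x. \<bar>f x\<bar> \<le> B)"
  unfolding bX_def bounded_iff by auto

lemma kernel_meas:
  assumes "transition_kernel Q"
  shows "Q \<in> borel \<rightarrow>\<^sub>M subprob_algebra borel"
proof (rule measurable_subprob_algebra)
  fix a show "subprob_space (Q a)" using assms unfolding transition_kernel_def
    by (simp add: prob_space_imp_subprob_space)
  show "sets (Q a) = sets borel" using assms unfolding transition_kernel_def by simp
next
  fix A :: "'a set" assume A: "A \<in> sets borel"
  have "(\<lambda>x. ennreal (measure (Q x) A)) \<in> borel_measurable borel"
    using assms A unfolding transition_kernel_def by auto
  moreover have "\<And>x. emeasure (Q x) A = ennreal (measure (Q x) A)"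
    using assms unfolding transition_kernel_def
    by (metis prob_space.finite_measure finite_measure.emeasure_eq_measure)
  ultimately show "(\<lambda>a. emeasure (Q a) A) \<in> borel_measurable borel" by simp
qed

lemma kernel_integrable:
  assumes "transition_kernel Q" "f \<in> bX"
  shows "integrable (Q x) f"
proof -
  have ps: "prob_space (Q x)" and s: "sets (Q x) = sets borel"
    using assms unfolding transition_kernel_def by auto
  obtain B where B: "\<forall>x. \<bar>f x\<bar> \<le> B" and m: "f \<in> borel_measurable borel"
    using assms(2) unfolding bX_iff by auto
  have m': "f \<in> borel_measurable (Q x)" using m by (subst measurable_cong_sets[OF s refl])
  show ?thesis
    apply (rule finite_measure.integrable_const_bound[where B=B])
    using ps prob_space.finite_measure apply blast
    using B apply (intro AE_I2) apply simp
    using m' by simp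
qed

lemma markov_bX:
  assumes "transition_kernel Q" "f \<in> bX"
  shows "markov_op Q f \<in> bX"
proof -
  obtain B where B: "\<forall>x. \<bar>f x\<bar> \<le> B" and m: "f \<in> borel_measurable borel"
    using assms(2) unfolding bX_iff by auto
  have meas: "markov_op Q f \<in> borel_measurable borel"
    unfolding markov_op_def
    using measurable_comp[OF kernel_meas[OF assms(1)] integral_measurable_subprob_algebra[OF m]]
    by (simp add: comp_def)
  have "\<bar>markov_op Q f x\<bar> \<le> B" for x
  proof -
    have ps: "prob_space (Q x)"
      using assms unfolding transition_kernel_def by auto
    have "\<bar>markov_op Q f x\<bar> \<le> (\<integral>y. \<bar>f y\<bar> \<partial>Q x)"
      unfolding markov_op_def by (rule integral_abs_bound)
    also have "\<dots> \<le> (\<integral>y. B \<partial>Q x)"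
      apply (rule integral_mono)
      using kernel_integrable[OF assms] apply (simp add: integrable_abs)
      using ps prob_space.finite_measure finite_measure.integrable_const apply blast
      using B by simp
    also have "\<dots> = B" using ps prob_space.prob_space[OF ps] by simp
    finally show ?thesis .
  qed
  then show ?thesis using meas unfolding bX_iff by blast
qed


lemma bX_add: "f \<in> bX \<Longrightarrow> g \<in> bX \<Longrightarrow> (\<lambda>x. f x + g x) \<in> bX"
  unfolding bX_iff
proof (elim conjE exE, intro conjI)
  fix B C assume "\<forall>x. \<bar>f x\<bar> \<le> B" "\<forall>x. \<bar>g x\<bar> \<le> C"
  then show "\<exists>B. \<forall>x. \<bar>f x + g x\<bar> \<le> B"
    by (metis abs_triangle_ineq add_mono order.trans)
qed auto

lemma bX_scale: "f \<in> bX \<Longrightarrow> (\<lambda>x. c * f x) \<in> bX"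
  unfolding bX_iff
proof (elim conjE exE, intro conjI)
  fix B assume "\<forall>x. \<bar>f x\<bar> \<le> B"
  then show "\<exists>B. \<forall>x. \<bar>c * f x\<bar> \<le> B"
    by (intro exI[of _ "\<bar>c\<bar> * B"]) (simp add: abs_mult mult_left_mono)
qed auto

lemma bX_abs: "f \<in> bX \<Longrightarrow> (\<lambda>x. \<bar>f x\<bar>) \<in> bX"
  unfolding bX_iff by auto

lemma bX_const: "(\<lambda>x. c) \<in> bX"
  unfolding bX_iff by auto

lemma bX_indicator: "B \<in> sets borel \<Longrightarrow> (indicator B :: 'a::metric_space \<Rightarrow> real) \<in> bX"
  unfolding bX_iff by (auto intro!: exI[of _ 1] simp: indicator_def)

lemma markov_mono:
  assumes "transition_kernel Q" "f \<in> bX" "g \<in> bX" "\<And>x. f x \<le> g x"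
  shows "markov_op Q f x \<le> markov_op Q g x"
  unfolding markov_op_def
  by (rule integral_mono) (use kernel_integrable[OF assms(1)] assms(2-4) in auto)

lemma markov_add:
  assumes "transition_kernel Q" "f \<in> bX" "g \<in> bX"
  shows "markov_op Q (\<lambda>x. f x + g x) = (\<lambda>x. markov_op Q f x + markov_op Q g x)"
  unfolding markov_op_def
  by (rule ext, rule Bochner_Integration.integral_add) (use kernel_integrable[OF assms(1)] assms(2-3) in auto)

lemma markov_scale:
  shows "markov_op Q (\<lambda>x. c * f x) = (\<lambda>x. c * markov_op Q f x)"
  unfolding markov_op_def by simp

lemma markov_one:
  assumes "transition_kernel Q"
  shows "markov_op Q (\<lambda>x. 1) = (\<lambda>x. 1)"
proof
  fix x
  have ps: "prob_space (Q x)" using assms unfolding transition_kernel_def by auto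
  show "markov_op Q (\<lambda>x. 1) x = 1"
    unfolding markov_op_def using prob_space.prob_space[OF ps] by simp
qed

lemma markov_zero:
  shows "markov_op Q (\<lambda>x. 0) = (\<lambda>x. 0)"
  unfolding markov_op_def by simp

lemma markov_abs:
  shows "\<bar>markov_op Q f x\<bar> \<le> markov_op Q (\<lambda>y. \<bar>f y\<bar>) x"
  unfolding markov_op_def by (rule integral_abs_bound)

lemma iter_bX:
  assumes "transition_kernel Q" "f \<in> bX"
  shows "(markov_op Q ^^ m) f \<in> bX"
  by (induction m) (auto intro: markov_bX[OF assms(1)] assms(2))

lemma iter_mono:
  assumes "transition_kernel Q" "f \<in> bX" "g \<in> bX" "\<And>x. f x \<le> g x"
  shows "(markov_op Q ^^ m) f x \<le> (markov_op Q ^^ m) g x"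
proof (induction m arbitrary: x)
  case 0 then show ?case using assms(4) by simp
next
  case (Suc m)
  show ?case using markov_mono[OF assms(1) iter_bX[OF assms(1) assms(2)] iter_bX[OF assms(1) assms(3)] Suc.IH]
    by simp
qed

lemma iter_add:
  assumes "transition_kernel Q" "f \<in> bX" "g \<in> bX"
  shows "(markov_op Q ^^ m) (\<lambda>x. f x + g x) = (\<lambda>x. (markov_op Q ^^ m) f x + (markov_op Q ^^ m) g x)"
proof (induction m)
  case 0 then show ?case by simp
next
  case (Suc m)
  show ?case using markov_add[OF assms(1) iter_bX[OF assms(1) assms(2)] iter_bX[OF assms(1) assms(3)]] Suc.IH
    by simp
qed

lemma iter_scale:
  shows "(markov_op Q ^^ m) (\<lambda>x. c * f x) = (\<lambda>x. c * (markov_op Q ^^ m) f x)"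
  by (induction m) (simp_all add: markov_scale)

lemma iter_one:
  assumes "transition_kernel Q"
  shows "(markov_op Q ^^ m) (\<lambda>x. 1) = (\<lambda>x. 1)"
  by (induction m) (simp_all add: markov_one[OF assms])

lemma iter_zero:
  shows "(markov_op Q ^^ m) (\<lambda>x. 0) = (\<lambda>x. 0)"
  by (induction m) (simp_all add: markov_zero)


lemma strong_reach:
  assumes K: "transition_kernel Q" and S: "strongly_irreducible Q"
    and B: "B \<in> sets borel" "B \<noteq> {}"
  shows "\<exists>n\<ge>1. kstep Q n x0 B > 0"
proof (rule ccontr)
  assume "\<not> ?thesis"
  then have z: "\<And>n. n \<ge> 1 \<Longrightarrow> (markov_op Q ^^ n) (indicator B) x0 \<le> 0"
    unfolding kstep_def by (meson not_le)
  let ?P = "\<lambda>m. markov_op Q ^^ m"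
  define I where "I = {f \<in> bX. \<forall>m\<ge>1. ?P m (\<lambda>y. \<bar>f y\<bar>) x0 = 0}"
  have nonneg: "?P m g x \<ge> 0" if "g \<in> bX" "\<And>x. g x \<ge> 0" for m g x
    using iter_mono[OF K bX_const[of 0] that(1), where m=m and x=x] that(2) iter_zero[where Q=Q and m=m] by simp
  have solid: "g \<in> I" if "f \<in> I" "g \<in> bX" "\<forall>x. \<bar>g x\<bar> \<le> \<bar>f x\<bar>" for f g
  proof -
    have fb: "f \<in> bX" using that(1) I_def by auto
    have "?P m (\<lambda>y. \<bar>g y\<bar>) x0 = 0" if m: "m \<ge> 1" for m
    proof -
      have "?P m (\<lambda>y. \<bar>g y\<bar>) x0 \<le> ?P m (\<lambda>y. \<bar>f y\<bar>) x0"
        using iter_mono[OF K bX_abs[OF \<open>g \<in> bX\<close>] bX_abs[OF fb]] \<open>\<forall>x. \<bar>g x\<bar> \<le> \<bar>f x\<bar>\<close> by blast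
      moreover have "?P m (\<lambda>y. \<bar>f y\<bar>) x0 = 0" using \<open>f \<in> I\<close> m I_def by auto
      moreover have "?P m (\<lambda>y. \<bar>g y\<bar>) x0 \<ge> 0" using nonneg bX_abs[OF \<open>g \<in> bX\<close>] by simp
      ultimately show ?thesis by linarith
    qed
    then show ?thesis using that(2) I_def by auto
  qed
  have ideal: "bX_ideal I"
    unfolding bX_ideal_def
  proof (intro conjI ballI allI impI)
    show "I \<subseteq> bX" using I_def by auto
    show "(\<lambda>x. 0) \<in> I" unfolding I_def using bX_const iter_zero[where Q=Q] by auto
  next
    fix f g assume f: "f \<in> I" and g: "g \<in> I"
    have fb: "f \<in> bX" and gb: "g \<in> bX" using f g I_def by auto
    have "?P m (\<lambda>y. \<bar>f y\<bar> + \<bar>g y\<bar>) x0 = 0" if "m \<ge> 1" for m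
      using iter_add[OF K bX_abs[OF fb] bX_abs[OF gb], of m] f g that I_def by auto
    then have "(\<lambda>y. \<bar>f y\<bar> + \<bar>g y\<bar>) \<in> I"
      using I_def bX_add[OF bX_abs[OF fb] bX_abs[OF gb]] by auto
    then show "(\<lambda>x. f x + g x) \<in> I"
      by (rule solid) (auto simp: bX_add fb gb)
  next
    fix c :: real and f assume f: "f \<in> I"
    have fb: "f \<in> bX" using f I_def by auto
    have "?P m (\<lambda>y. \<bar>c\<bar> * \<bar>f y\<bar>) x0 = 0" if "m \<ge> 1" for m
      using iter_scale[where Q=Q and m=m and c="\<bar>c\<bar>" and f="\<lambda>y. \<bar>f y\<bar>"] f that I_def by auto
    then have "(\<lambda>y. \<bar>c\<bar> * \<bar>f y\<bar>) \<in> I"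
      using I_def bX_scale[OF bX_abs[OF fb]] by auto
    then show "(\<lambda>x. c * f x) \<in> I"
      by (rule solid) (auto simp: bX_scale fb abs_mult)
  next
    fix f g assume "f \<in> I" "g \<in> bX" "\<forall>x. \<bar>g x\<bar> \<le> \<bar>f x\<bar>"
    then show "g \<in> I" by (rule solid)
  qed
  have inv: "markov_op Q f \<in> I" if f: "f \<in> I" for f
  proof -
    have fb: "f \<in> bX" using f I_def by auto
    have qb: "markov_op Q f \<in> bX" by (rule markov_bX[OF K fb])
    have "?P m (\<lambda>y. \<bar>markov_op Q f y\<bar>) x0 = 0" if m: "m \<ge> 1" for m
    proof -
      have "?P m (\<lambda>y. \<bar>markov_op Q f y\<bar>) x0 \<le> ?P m (markov_op Q (\<lambda>y. \<bar>f y\<bar>)) x0"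
        by (rule iter_mono[OF K bX_abs[OF qb] markov_bX[OF K bX_abs[OF fb]]]) (rule markov_abs)
      also have "\<dots> = ?P (Suc m) (\<lambda>y. \<bar>f y\<bar>) x0"
        by (simp add: funpow_Suc_right del: funpow.simps)
      also have "\<dots> = 0" using f I_def by auto
      finally show ?thesis using nonneg bX_abs[OF qb]
        by (smt (verit, best))
    qed
    then show ?thesis using qb I_def by auto
  qed
  have "I = {\<lambda>x. 0} \<or> I = bX"
    using S ideal inv unfolding strongly_irreducible_def irreducible_op_def by blast
  moreover have "indicator B \<in> I"
  proof -
    have "?P m (\<lambda>y. \<bar>indicator B y\<bar>) x0 = 0" if "m \<ge> 1" for m
    proof -
      have "?P m (indicator B) x0 \<ge> 0"
        using nonneg bX_indicator[OF B(1)] by simp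
      then show ?thesis using z[OF that] by simp
    qed
    then show ?thesis using I_def bX_indicator[OF B(1)] by auto
  qed
  moreover have "indicator B \<noteq> (\<lambda>x. 0::real)"
  proof
    assume "indicator B = (\<lambda>x. 0::real)"
    moreover obtain b where "b \<in> B" using B(2) by auto
    ultimately show False by (metis indicator_simps(1) zero_neq_one)
  qed
  moreover have "(\<lambda>x. 1) \<notin> I"
  proof
    assume "(\<lambda>x. 1) \<in> I"
    then have "?P 1 (\<lambda>y. \<bar>1::real\<bar>) x0 = 0" using I_def by blast
    then show False using iter_one[OF K, of 1] by simp
  qed
  ultimately show False using bX_const by auto
qed

definition bigmeasure :: "'a::metric_space measure" where
  "bigmeasure = measure_of UNIV (sets borel) (\<lambda>B. if B = {} then 0 else \<infinity>)"

lemma bigmeasure_props: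
  "sets (bigmeasure :: 'a::metric_space measure) = sets borel"
  "B \<in> sets borel \<Longrightarrow> emeasure (bigmeasure :: 'a::metric_space measure) B = (if B = {} then 0 else \<infinity>)"
proof -
  have sa: "sigma_algebra UNIV (sets (borel :: 'a measure))"
    by (metis sets.sigma_algebra_axioms space_borel)
  show "sets (bigmeasure :: 'a::metric_space measure) = sets borel"
    unfolding bigmeasure_def
    by (metis sa sets.space_closed sets_measure_of sigma_algebra.sigma_sets_eq space_borel)
  assume B: "B \<in> sets borel"
  have pos: "positive (sets (borel :: 'a measure)) (\<lambda>B::'a set. if B = {} then 0 else \<infinity>)"
    unfolding positive_def by simp
  have ca: "countably_additive (sets (borel :: 'a measure)) (\<lambda>B::'a set. if B = {} then 0 else \<infinity>)"
    unfolding countably_additive_def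
  proof (intro allI impI)
    fix A :: "nat \<Rightarrow> 'a set"
    show "(\<Sum>i. if A i = {} then 0 else \<infinity>) = (if \<Union> (range A) = {} then 0 else (\<infinity>::ennreal))"
    proof (cases "\<forall>i. A i = {}")
      case True then show ?thesis by simp
    next
      case False
      then obtain j where j: "A j \<noteq> {}" by auto
      have "(\<infinity>::ennreal) \<le> (\<Sum>i. if A i = {} then 0 else \<infinity>)"
        using sum_le_suminf[of "\<lambda>i. if A i = {} then 0 else (\<infinity>::ennreal)" "{j}"] j
        by (simp add: summableI)
      then show ?thesis using j by (auto simp: top_unique)
    qed
  qed
  show "emeasure (bigmeasure :: 'a::metric_space measure) B = (if B = {} then 0 else \<infinity>)"
    unfolding bigmeasure_def using emeasure_measure_of_sigma[OF sa pos ca B] .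
qed

theorem lemma4p3:
  fixes Q :: "'a::metric_space \<Rightarrow> 'a measure"
  assumes "transition_kernel Q"
  shows "(strongly_irreducible Q \<longrightarrow> weakly_irreducible Q) \<and>
         (weakly_irreducible Q \<longrightarrow> open_set_irreducible Q)"
proof (intro conjI impI)
  assume S: "strongly_irreducible Q"
  show "weakly_irreducible Q"
    unfolding weakly_irreducible_def
  proof (intro exI[of _ bigmeasure] conjI allI impI)
    show "sets bigmeasure = sets borel" by (rule bigmeasure_props(1))
    fix G :: "'a set" assume "open G \<and> G \<noteq> {}"
    then show "emeasure bigmeasure G > 0" using bigmeasure_props(2)[of G] by auto
  next
    show "pi_irreducible Q bigmeasure"
      unfolding pi_irreducible_def
    proof (intro allI ballI impI)
      fix x :: 'a and B :: "'a set" assume B: "B \<in> sets borel" and "emeasure bigmeasure B > 0"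
      then have "B \<noteq> {}" using bigmeasure_props(2)[OF B] by auto
      then show "\<exists>n\<ge>1. kstep Q n x B > 0" using strong_reach[OF assms S B] by blast
    qed
  qed
next
  assume "weakly_irreducible Q"
  then obtain \<pi> where p: "\<forall>G. open G \<and> G \<noteq> {} \<longrightarrow> emeasure \<pi> G > 0" "pi_irreducible Q \<pi>"
    unfolding weakly_irreducible_def by blast
  show "open_set_irreducible Q"
    unfolding open_set_irreducible_def reachable_def
  proof (intro allI impI)
    fix x y and G :: "'a set" assume G: "open G \<and> y \<in> G"
    then have "emeasure \<pi> G > 0" using p(1) by auto
    then show "\<exists>n\<ge>1. kstep Q n x G > 0" using p(2) G unfolding pi_irreducible_def by auto
  qed
qed

end
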